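(* Let $A$ be a 2-sided residuated $\vee$-semilattice, let $F$ be a filter of $A$ and let $a\in A$ with $a\notin F$. Then there exists a $\vee$-prime filter $G$ of $A$ such that $F\subseteq G$ and $a\notin G$.
   Context: A residuated poset is a partially ordered semigroup $(A;\cdot,\le)$ with binary operations $\to,\leadsto$ such that $x\cdot y\le z$ iff $x\le y\to z$ iff $y\le x\leadsto z$ for all $x,y,z$. It is 2-sided if $x\cdot y\le x$ and $x\cdot y\le y$ for all $x,y$. It is a residuated $\vee$-semilattice if $(A,\le)$ is a join-semilattice. A filter of $A$ is a nonempty subset that is upward closed and closed under $\cdot$. A filter $G$ is $\vee$-prime if $x\vee y\in G$ implies $x\in G$ or $y\in G$. *)

theory Defs
  imports Main
begin

text \<open>A residuated poset on the carrier type 'a (ordered by the type's order):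
  a partially ordered semigroup (associative, multiplication monotone in both arguments)
  with residuals r (written x \<rightarrow> z as r x z) and l (written x \<leadsto> z as l x z) such that
  x*y \<le> z iff x \<le> y \<rightarrow> z iff y \<le> x \<leadsto> z.\<close>

definition residuated_poset ::
  "('a::order \<Rightarrow> 'a \<Rightarrow> 'a) \<Rightarrow> ('a \<Rightarrow> 'a \<Rightarrow> 'a) \<Rightarrow> ('a \<Rightarrow> 'a \<Rightarrow> 'a) \<Rightarrow> bool" where
  "residuated_poset m r l \<longleftrightarrow>
     (\<forall>x y z. m (m x y) z = m x (m y z)) \<and>
     (\<forall>x y z. x \<le> y \<longrightarrow> m x z \<le> m y z \<and> m z x \<le> m z y) \<and>
     (\<forall>x y z. (m x y \<le> z \<longleftrightarrow> x \<le> r y z) \<and> (m x y \<le> z \<longleftrightarrow> y \<le> l x z))"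

definition two_sided :: "('a::order \<Rightarrow> 'a \<Rightarrow> 'a) \<Rightarrow> bool" where
  "two_sided m \<longleftrightarrow> (\<forall>x y. m x y \<le> x \<and> m x y \<le> y)"

definition res_filter :: "('a::order \<Rightarrow> 'a \<Rightarrow> 'a) \<Rightarrow> 'a set \<Rightarrow> bool" where
  "res_filter m F \<longleftrightarrow> F \<noteq> {} \<and> (\<forall>x\<in>F. \<forall>y. x \<le> y \<longrightarrow> y \<in> F) \<and> (\<forall>x\<in>F. \<forall>y\<in>F. m x y \<in> F)"

definition sup_prime :: "'a::semilattice_sup set \<Rightarrow> bool" where
  "sup_prime G \<longleftrightarrow> (\<forall>x y. sup x y \<in> G \<longrightarrow> x \<in> G \<or> y \<in> G)"

end

theory Submission
  imports Defs
begin

primrec mp :: "('a \<Rightarrow> 'a \<Rightarrow> 'a) \<Rightarrow> 'a \<Rightarrow> nat \<Rightarrow> 'a" where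
  "mp m u 0 = u"
| "mp m u (Suc n) = m u (mp m u n)"

locale rs =
  fixes m r l :: "'a::semilattice_sup \<Rightarrow> 'a \<Rightarrow> 'a"
  assumes rp: "residuated_poset m r l" and ts: "two_sided m"
begin

lemma assoc: "m (m x y) z = m x (m y z)" using rp unfolding residuated_poset_def by blast
lemma monoL: "x \<le> y \<Longrightarrow> m x z \<le> m y z" using rp unfolding residuated_poset_def by blast
lemma monoR: "x \<le> y \<Longrightarrow> m z x \<le> m z y" using rp unfolding residuated_poset_def by blast
lemma resr: "m x y \<le> z \<longleftrightarrow> x \<le> r y z" using rp unfolding residuated_poset_def by blast
lemma resl: "m x y \<le> z \<longleftrightarrow> y \<le> l x z" using rp unfolding residuated_poset_def by blast
lemma le1: "m x y \<le> x" using ts unfolding two_sided_def by blast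
lemma le2: "m x y \<le> y" using ts unfolding two_sided_def by blast

lemma distR: "m u (sup A B) \<le> sup (m u A) (m u B)"
proof -
  have "A \<le> l u (sup (m u A) (m u B))" using resl by (metis sup_ge1)
  moreover have "B \<le> l u (sup (m u A) (m u B))" using resl by (metis sup_ge2)
  ultimately show ?thesis using resl by (metis sup_least)
qed

lemma distL: "m (sup u v) X \<le> sup (m u X) (m v X)"
proof -
  have "u \<le> r X (sup (m u X) (m v X))" using resr by (metis sup_ge1)
  moreover have "v \<le> r X (sup (m u X) (m v X))" using resr by (metis sup_ge2)
  ultimately show ?thesis using resr by (metis sup_least)
qed

lemma mp_dec: "n \<le> k \<Longrightarrow> mp m u k \<le> mp m u n"
proof (induction k)
  case 0 then show ?case by simp
next
  case (Suc k)
  show ?case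
  proof (cases "n = Suc k")
    case False
    then have "mp m u k \<le> mp m u n" using Suc by simp
    then show ?thesis using le2[of u "mp m u k"] by simp
  qed simp
qed

lemma mp_mono: "u \<le> u' \<Longrightarrow> mp m u n \<le> mp m u' n"
proof (induction n)
  case (Suc n)
  have "m u (mp m u n) \<le> m u' (mp m u n)" using Suc.prems by (rule monoL)
  also have "\<dots> \<le> m u' (mp m u' n)" using Suc by (intro monoR) simp
  finally show ?case by simp
qed simp

lemma mp_mult: "m (mp m u n) (mp m u k) = mp m u (Suc (n + k))"
  by (induction n) (simp_all add: assoc)

lemma mp_filter: "res_filter m G \<Longrightarrow> u \<in> G \<Longrightarrow> mp m u n \<in> G"
  by (induction n) (auto simp: res_filter_def)

lemma mp_sup: "mp m (sup u v) (i + j) \<le> sup (mp m u i) (mp m v j)"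
proof (induction "i + j" arbitrary: i j)
  case 0 then show ?case by simp
next
  case (Suc n)
  let ?s = "sup u v"
  have h: "mp m ?s (i + j) = m ?s (mp m ?s n)" using Suc(2)[symmetric] by simp
  have A: "m u (mp m ?s n) \<le> sup (mp m u i) (mp m v j)"
  proof (cases i)
    case 0 then show ?thesis using le1[of u] by (simp add: le_supI1)
  next
    case (Suc i')
    with \<open>Suc n = i + j\<close> have "n = i' + j" by simp
    then have "mp m ?s n \<le> sup (mp m u i') (mp m v j)" using Suc.hyps(1) by blast
    then have "m u (mp m ?s n) \<le> m u (sup (mp m u i') (mp m v j))" by (rule monoR)
    also have "\<dots> \<le> sup (m u (mp m u i')) (m u (mp m v j))" by (rule distR)
    also have "\<dots> \<le> sup (mp m u i) (mp m v j)"
      using Suc le2[of u "mp m v j"] by (intro sup_mono) simp_all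
    finally show ?thesis .
  qed
  have B: "m v (mp m ?s n) \<le> sup (mp m u i) (mp m v j)"
  proof (cases j)
    case 0 then show ?thesis using le1[of v] by (simp add: le_supI2)
  next
    case (Suc j')
    with \<open>Suc n = i + j\<close> have "n = i + j'" by simp
    then have "mp m ?s n \<le> sup (mp m u i) (mp m v j')" using Suc.hyps(1) by blast
    then have "m v (mp m ?s n) \<le> m v (sup (mp m u i) (mp m v j'))" by (rule monoR)
    also have "\<dots> \<le> sup (m v (mp m u i)) (m v (mp m v j'))" by (rule distR)
    also have "\<dots> \<le> sup (mp m u i) (mp m v j)"
      using Suc le2[of v "mp m u i"] by (intro sup_mono) simp_all
    finally show ?thesis .
  qed
  have "m ?s (mp m ?s n) \<le> sup (m u (mp m ?s n)) (m v (mp m ?s n))" by (rule distL)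
  also have "\<dots> \<le> sup (mp m u i) (mp m v j)" using A B by simp
  finally show ?case using h by simp
qed

definition gen where "gen G x = {z. \<exists>g\<in>G. \<exists>n. mp m (m g x) n \<le> z}"

lemma gen_filter:
  assumes G: "res_filter m G"
  shows "res_filter m (gen G x) \<and> G \<subseteq> gen G x \<and> x \<in> gen G x"
proof -
  obtain g0 where g0: "g0 \<in> G" using G unfolding res_filter_def by (meson ex_in_conv)
  have sub: "G \<subseteq> gen G x"
  proof
    fix g assume "g \<in> G"
    moreover have "mp m (m g x) 0 \<le> g" using le1[of g x] by simp
    ultimately show "g \<in> gen G x" unfolding gen_def by blast
  qed
  have "mp m (m g0 x) 0 \<le> x" using le2[of g0 x] by simp
  then have xin: "x \<in> gen G x" unfolding gen_def using g0 by blast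
  have up: "\<forall>z\<in>gen G x. \<forall>y. z \<le> y \<longrightarrow> y \<in> gen G x"
    unfolding gen_def by (blast intro: order_trans)
  have mul: "\<forall>z1\<in>gen G x. \<forall>z2\<in>gen G x. m z1 z2 \<in> gen G x"
  proof (intro ballI)
    fix z1 z2 assume "z1 \<in> gen G x" "z2 \<in> gen G x"
    then obtain g n g' k where g: "g \<in> G" "mp m (m g x) n \<le> z1"
      and g': "g' \<in> G" "mp m (m g' x) k \<le> z2" unfolding gen_def by blast
    define h where "h = m g g'"
    have hG: "h \<in> G" using G g g' unfolding res_filter_def h_def by blast
    have "m h x \<le> m g x" unfolding h_def by (rule monoL, rule le1)
    then have 1: "mp m (m h x) n \<le> z1" using g mp_mono order_trans by blast
    have "m h x \<le> m g' x" unfolding h_def by (rule monoL, rule le2)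
    then have 2: "mp m (m h x) k \<le> z2" using g' mp_mono order_trans by blast
    have "mp m (m h x) (Suc (n + k)) = m (mp m (m h x) n) (mp m (m h x) k)" by (simp add: mp_mult)
    also have "\<dots> \<le> m z1 (mp m (m h x) k)" using 1 by (rule monoL)
    also have "\<dots> \<le> m z1 z2" using 2 by (rule monoR)
    finally show "m z1 z2 \<in> gen G x" unfolding gen_def using hG by blast
  qed
  have "gen G x \<noteq> {}" using xin by blast
  then show ?thesis using up mul xin sub unfolding res_filter_def by simp
qed

end

theorem theorem5p5:
  fixes m r l :: "'a::semilattice_sup \<Rightarrow> 'a \<Rightarrow> 'a" and F :: "'a set" and a :: 'a
  assumes "residuated_poset m r l" and "two_sided m"
    and "res_filter m F" and "a \<notin> F"
  shows "\<exists>G. res_filter m G \<and> sup_prime G \<and> F \<subseteq> G \<and> a \<notin> G"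
proof -
  interpret rs m r l using assms(1,2) by unfold_locales
  define S where "S = {G. res_filter m G \<and> F \<subseteq> G \<and> a \<notin> G}"
  have "\<forall>C\<in>chains S. \<exists>U\<in>S. \<forall>X\<in>C. X \<subseteq> U"
  proof
    fix C assume C: "C \<in> chains S"
    show "\<exists>U\<in>S. \<forall>X\<in>C. X \<subseteq> U"
    proof (cases "C = {}")
      case True then show ?thesis using assms(3,4) unfolding S_def by blast
    next
      case False
      have CS: "C \<subseteq> S" and ch: "\<forall>X\<in>C. \<forall>Y\<in>C. X \<subseteq> Y \<or> Y \<subseteq> X"
        using C unfolding chains_def chain_subset_def by auto
      have "res_filter m (\<Union>C)"
        unfolding res_filter_def
      proof (intro conjI ballI allI impI)
        obtain X where "X \<in> C" using False by blast
        then have "X \<noteq> {}" using CS unfolding S_def res_filter_def by auto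
        then show "\<Union>C \<noteq> {}" using \<open>X \<in> C\<close> by blast
      next
        fix x y assume "x \<in> \<Union>C" "x \<le> y"
        then obtain X where X: "X \<in> C" "x \<in> X" by blast
        then have "res_filter m X" using CS unfolding S_def by blast
        then have "y \<in> X" using X \<open>x \<le> y\<close> unfolding res_filter_def by blast
        then show "y \<in> \<Union>C" using X by blast
      next
        fix x y assume x: "x \<in> \<Union>C" and y: "y \<in> \<Union>C"
        then obtain X Y where "X \<in> C" "Y \<in> C" "x \<in> X" "y \<in> Y" by blast
        then obtain Z where Z: "Z \<in> C" "x \<in> Z" "y \<in> Z" using ch by blast
        then have "res_filter m Z" using CS unfolding S_def by blast
        then have "m x y \<in> Z" using Z unfolding res_filter_def by blast
        then show "m x y \<in> \<Union>C" using Z by blast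
      qed
      then have "\<Union>C \<in> S" using False CS unfolding S_def by blast
      then show ?thesis by blast
    qed
  qed
  then obtain G where GS: "G \<in> S" and max: "\<forall>X\<in>S. G \<subseteq> X \<longrightarrow> X = G"
    using Zorn_Lemma2[of S] by blast
  have Gf: "res_filter m G" and FG: "F \<subseteq> G" and aG: "a \<notin> G" using GS unfolding S_def by auto
  have key: "a \<in> gen G x" if "x \<notin> G" for x
  proof (rule ccontr)
    assume "a \<notin> gen G x"
    then have "gen G x \<in> S" using gen_filter[OF Gf, of x] FG unfolding S_def by blast
    then have "gen G x = G" using max gen_filter[OF Gf, of x] by blast
    then show False using gen_filter[OF Gf, of x] that by blast
  qed
  have "sup_prime G"
    unfolding sup_prime_def
  proof (intro allI impI, rule ccontr)
    fix x y assume xy: "sup x y \<in> G" and n: "\<not> (x \<in> G \<or> y \<in> G)"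
    obtain g n1 where g: "g \<in> G" "mp m (m g x) n1 \<le> a" using key n unfolding gen_def by blast
    obtain g' n2 where g': "g' \<in> G" "mp m (m g' y) n2 \<le> a" using key n unfolding gen_def by blast
    define c where "c = m g g'"
    have cG: "c \<in> G" using Gf g g' unfolding res_filter_def c_def by blast
    define u where "u = m c x"
    define v where "v = m c y"
    define K where "K = n1 + n2"
    have "u \<le> m g x" unfolding u_def c_def by (rule monoL, rule le1)
    then have "mp m u K \<le> mp m u n1" "mp m u n1 \<le> mp m (m g x) n1"
      using mp_dec[of n1 K u] mp_mono[of u "m g x" n1] unfolding K_def by simp_all
    then have ua: "mp m u K \<le> a" using g by (meson order_trans)
    have "v \<le> m g' y" unfolding v_def c_def by (rule monoL, rule le2)
    then have "mp m v K \<le> mp m v n2" "mp m v n2 \<le> mp m (m g' y) n2"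
      using mp_dec[of n2 K v] mp_mono[of v "m g' y" n2] unfolding K_def by simp_all
    then have va: "mp m v K \<le> a" using g' by (meson order_trans)
    have "m c (sup x y) \<le> sup u v" unfolding u_def v_def by (rule distR)
    then have "mp m (m c (sup x y)) (K + K) \<le> mp m (sup u v) (K + K)" by (rule mp_mono)
    also have "\<dots> \<le> sup (mp m u K) (mp m v K)" by (rule mp_sup)
    also have "\<dots> \<le> a" using ua va by simp
    finally have le: "mp m (m c (sup x y)) (K + K) \<le> a" .
    have "m c (sup x y) \<in> G" using Gf cG xy unfolding res_filter_def by blast
    then have "mp m (m c (sup x y)) (K + K) \<in> G" using mp_filter Gf by blast
    then have "a \<in> G" using Gf le unfolding res_filter_def by blast
    then show False using aG by blast
  qed
  then show ?thesis using Gf FG aG by blast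
qed

end
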